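(* For all natural numbers $m,n$, the polytope $\operatorname{Hom}(\Box_m,\triangle_n)$ has exactly $(n+1)(mn+1)$ vertices. Moreover, $\operatorname{Hom}(\Box_m,\triangle_n)$ is affinely isomorphic to the convex hull in $\mathbb{R}^{n+nm}$ of the points $$0,\quad 2e_i,\quad e_i+e_{ik},\quad e_i-e_{ik},\quad (e_i+e_j)+(e_{ik}-e_{jk})\ \ (i\ne j),$$ where $i,j$ range over $\{1,\ldots,n\}$ and $k$ over $\{1,\ldots,m\}$, and these points are exactly its vertices.
   Context: For convex polytopes $P,Q$, $\operatorname{Hom}(P,Q)$ is the set of maps $P\to Q$ that are restrictions of affine maps $\operatorname{Aff}(P)\to\operatorname{Aff}(Q)$; it is a convex polytope in the affine space of affine maps $\operatorname{Aff}(P)\to\operatorname{Aff}(Q)$. $\triangle_n=\operatorname{conv}(0,e_1,\ldots,e_n)\subset\mathbb{R}^n$, $\Box_m=\operatorname{conv}\{(a_1,\ldots,a_m):a_i=\pm1\}\subset\mathbb{R}^m$. In $\mathbb{R}^{n+nm}$ the standard basis vectors are indexed by single indices $i\in\{1,\ldots,n\}$ (denoted $e_i$) and double indices $(i,k)$ with $i\in\{1,\ldots,n\}$, $k\in\{1,\ldots,m\}$ (denoted $e_{ik}$). *)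

theory Defs
  imports "HOL-Analysis.Analysis" "HOL-Library.Function_Algebras"
begin

section \<open>Functions into a real vector space form a real vector space (pointwise)\<close>

instantiation "fun" :: (type, real_vector) real_vector
begin
definition scaleR_fun :: "real \<Rightarrow> ('a \<Rightarrow> 'b) \<Rightarrow> 'a \<Rightarrow> 'b"
  where "scaleR_fun c f = (\<lambda>x. c *\<^sub>R f x)"
instance
  by standard (auto simp: scaleR_fun_def fun_eq_iff scaleR_add_right scaleR_add_left)
end

section \<open>Affine maps and Hom(P,Q)\<close>

text \<open>A map is affine on an affine set A if it preserves affine combinations of two points.\<close>
definition affine_map_on :: "'a::real_vector set \<Rightarrow> ('a \<Rightarrow> 'b::real_vector) \<Rightarrow> bool" where
  "affine_map_on A g \<longleftrightarrow>
     (\<forall>x\<in>A. \<forall>y\<in>A. \<forall>u::real. g ((1 - u) *\<^sub>R x + u *\<^sub>R y) = (1 - u) *\<^sub>R g x + u *\<^sub>R g y)"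

text \<open>Hom(P,Q): affine maps Aff(P) \<rightarrow> Aff(Q) mapping P into Q. A map on Aff(P) is encoded
  as a total function that is 0 outside Aff(P), so Hom(P,Q) lives in the real vector
  space of functions.\<close>
definition Hom :: "'a::real_vector set \<Rightarrow> 'b::real_vector set \<Rightarrow> ('a \<Rightarrow> 'b) set" where
  "Hom P Q = {f. affine_map_on (affine hull P) f
                 \<and> f ` (affine hull P) \<subseteq> affine hull Q
                 \<and> f ` P \<subseteq> Q
                 \<and> (\<forall>x. x \<notin> affine hull P \<longrightarrow> f x = 0)}"

definition affinely_isomorphic :: "'a::real_vector set \<Rightarrow> 'b::real_vector set \<Rightarrow> bool" where
  "affinely_isomorphic S T \<longleftrightarrow> (\<exists>h. affine_map_on UNIV h \<and> bij_betw h S T)"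

section \<open>R^k as functions nat \<Rightarrow> real supported on {1..k}\<close>

definition unitv :: "nat \<Rightarrow> nat \<Rightarrow> real" where
  "unitv i = (\<lambda>j. if j = i then 1 else 0)"

definition cube_std :: "nat \<Rightarrow> (nat \<Rightarrow> real) set" where
  "cube_std m = convex hull {a. (\<forall>i\<in>{1..m}. a i = 1 \<or> a i = -1) \<and> (\<forall>i. i \<notin> {1..m} \<longrightarrow> a i = 0)}"

definition simplex_std :: "nat \<Rightarrow> (nat \<Rightarrow> real) set" where
  "simplex_std n = convex hull (insert 0 {unitv i | i. i \<in> {1..n}})"

section \<open>R^{n+nm} with basis e_i (Inl i) and e_ik (Inr (i,k))\<close>

definition eS :: "nat \<Rightarrow> nat + nat \<times> nat \<Rightarrow> real" where
  "eS i = (\<lambda>z. if z = Inl i then 1 else 0)"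

definition eD :: "nat \<Rightarrow> nat \<Rightarrow> nat + nat \<times> nat \<Rightarrow> real" where
  "eD i k = (\<lambda>z. if z = Inr (i, k) then 1 else 0)"

definition hom_pts :: "nat \<Rightarrow> nat \<Rightarrow> (nat + nat \<times> nat \<Rightarrow> real) set" where
  "hom_pts n m =
     {0}
     \<union> {2 *\<^sub>R eS i | i. i \<in> {1..n}}
     \<union> {eS i + eD i k | i k. i \<in> {1..n} \<and> k \<in> {1..m}}
     \<union> {eS i - eD i k | i k. i \<in> {1..n} \<and> k \<in> {1..m}}
     \<union> {(eS i + eS j) + (eD i k - eD j k) | i j k. i \<in> {1..n} \<and> j \<in> {1..n} \<and> i \<noteq> j \<and> k \<in> {1..m}}"

end

theory Submission
  imports Defs
begin


lemma sum_apply_fun: "(sum F I) z = (\<Sum>i\<in>I. F i z)"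
  by (induction I rule: infinite_finite_induct) auto

lemma scaleR_apply [simp]: "(c *\<^sub>R f) x = c *\<^sub>R f x"
  by (simp add: scaleR_fun_def)

section \<open>Affine sets through 0\<close>

lemma aff0_scale:
  assumes "affine A" "0 \<in> A" "x \<in> A" shows "t *\<^sub>R x \<in> A"
proof -
  have "(1 - t) *\<^sub>R 0 + t *\<^sub>R x \<in> A" using assms unfolding affine_def by (metis diff_add_cancel)
  thus ?thesis by simp
qed

lemma aff0_add:
  assumes "affine A" "0 \<in> A" "x \<in> A" "y \<in> A" shows "x + y \<in> A"
proof -
  have "(1/2) *\<^sub>R x + (1/2) *\<^sub>R y \<in> A" using assms unfolding affine_def by force
  hence "2 *\<^sub>R ((1/2) *\<^sub>R x + (1/2) *\<^sub>R y) \<in> A" using aff0_scale assms by blast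
  thus ?thesis by (simp add: scaleR_add_right)
qed

lemma aff0_lincomb:
  assumes "affine A" "0 \<in> A" "finite I" "\<And>i. i \<in> I \<Longrightarrow> v i \<in> A"
  shows "(\<Sum>i\<in>I. a i *\<^sub>R v i) \<in> A"
  using assms(3,4)
proof (induction I rule: finite_induct)
  case empty then show ?case using assms by simp
next
  case (insert x F)
  have "a x *\<^sub>R v x \<in> A" using insert by (intro aff0_scale[OF assms(1,2)]) auto
  then show ?case using insert by (simp add: aff0_add[OF assms(1,2)])
qed

lemma affmap_scale:
  assumes "affine_map_on A g" "0 \<in> A" "x \<in> A"
  shows "g (t *\<^sub>R x) = g 0 + t *\<^sub>R (g x - g 0)"
proof -
  have "g ((1 - t) *\<^sub>R 0 + t *\<^sub>R x) = (1 - t) *\<^sub>R g 0 + t *\<^sub>R g x"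
    using assms unfolding affine_map_on_def by blast
  thus ?thesis by (simp add: algebra_simps)
qed

lemma affmap_add:
  assumes "affine A" "affine_map_on A g" "0 \<in> A" "x \<in> A" "y \<in> A"
  shows "g (x + y) = g x + g y - g 0"
proof -
  define z where "z = (1 - 1/2) *\<^sub>R x + (1/2) *\<^sub>R y"
  have zA: "z \<in> A" using assms unfolding affine_def z_def by force
  have gz: "g z = (1 - 1/2) *\<^sub>R g x + (1/2) *\<^sub>R g y"
    using assms unfolding affine_map_on_def z_def by blast
  have "x + y = 2 *\<^sub>R z" by (simp add: z_def scaleR_add_right)
  hence "g (x + y) = g 0 + 2 *\<^sub>R (g z - g 0)" using affmap_scale[OF assms(2,3) zA] by simp
  also have "\<dots> = g x + g y - g 0" by (simp add: gz algebra_simps scaleR_2)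
  finally show ?thesis .
qed

lemma affmap_lincomb:
  assumes "affine A" "affine_map_on A g" "0 \<in> A" "finite I" "\<And>i. i \<in> I \<Longrightarrow> v i \<in> A"
  shows "g (\<Sum>i\<in>I. a i *\<^sub>R v i) = g 0 + (\<Sum>i\<in>I. a i *\<^sub>R (g (v i) - g 0))"
  using assms(4,5)
proof (induction I rule: finite_induct)
  case empty then show ?case by simp
next
  case (insert x F)
  have s: "(\<Sum>i\<in>F. a i *\<^sub>R v i) \<in> A" using aff0_lincomb[OF assms(1,3) insert(1)] insert by blast
  have vx: "a x *\<^sub>R v x \<in> A" using aff0_scale assms insert by blast
  have "g (\<Sum>i\<in>insert x F. a i *\<^sub>R v i) = g (a x *\<^sub>R v x + (\<Sum>i\<in>F. a i *\<^sub>R v i))"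
    using insert by simp
  also have "\<dots> = g (a x *\<^sub>R v x) + g (\<Sum>i\<in>F. a i *\<^sub>R v i) - g 0"
    using affmap_add[OF assms(1,2,3) vx s] .
  also have "\<dots> = g 0 + (\<Sum>i\<in>insert x F. a i *\<^sub>R (g (v i) - g 0))"
    using insert affmap_scale[OF assms(2,3), of "v x" "a x"] by simp
  finally show ?case .
qed

section \<open>Supports\<close>

definition supp_on :: "nat \<Rightarrow> (nat \<Rightarrow> real) set" where
  "supp_on N = {y. \<forall>j. j \<notin> {1..N} \<longrightarrow> y j = 0}"

lemma affine_supp_on: "affine (supp_on N)"
  unfolding affine_def supp_on_def by auto

lemma unitv_supp: "k \<in> {1..N} \<Longrightarrow> unitv k \<in> supp_on N"
  by (auto simp: supp_on_def unitv_def)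

lemma supp_on_expand:
  assumes "x \<in> supp_on N" shows "x = (\<Sum>k\<in>{1..N}. x k *\<^sub>R unitv k)"
proof
  fix j
  have "(\<Sum>k\<in>{1..N}. x k *\<^sub>R unitv k) j = (\<Sum>k\<in>{1..N}. x k * unitv k j)"
    by (simp add: sum_apply_fun)
  also have "\<dots> = (\<Sum>k\<in>{1..N}. if j = k then x k else 0)"
    by (rule sum.cong) (auto simp: unitv_def)
  also have "\<dots> = x j" using assms by (simp add: sum.delta supp_on_def)
  finally show "x j = (\<Sum>k\<in>{1..N}. x k *\<^sub>R unitv k) j" by simp
qed

lemma affine_hull_eq_supp:
  assumes "S \<subseteq> supp_on N" "0 \<in> S" "\<And>k. k \<in> {1..N} \<Longrightarrow> unitv k \<in> S"
  shows "affine hull S = supp_on N"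
proof
  show "affine hull S \<subseteq> supp_on N" by (rule hull_minimal[of S "supp_on N" affine, OF assms(1) affine_supp_on])
  show "supp_on N \<subseteq> affine hull S"
  proof
    fix x assume x: "x \<in> supp_on N"
    have "(\<Sum>k\<in>{1..N}. x k *\<^sub>R unitv k) \<in> affine hull S"
      by (rule aff0_lincomb) (auto intro: hull_inc assms(2) assms(3)[simplified])
    thus "x \<in> affine hull S" using supp_on_expand[OF x] by simp
  qed
qed

section \<open>Cube\<close>

definition Vc :: "nat \<Rightarrow> (nat \<Rightarrow> real) set" where
  "Vc m = {a. (\<forall>i\<in>{1..m}. a i = 1 \<or> a i = -1) \<and> (\<forall>i. i \<notin> {1..m} \<longrightarrow> a i = 0)}"

lemma cube_hull: "cube_std m = convex hull Vc m"
  by (simp add: cube_std_def Vc_def)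

lemma Vc_supp: "Vc m \<subseteq> supp_on m"
  by (auto simp: Vc_def supp_on_def)

lemma cube_supp: "cube_std m \<subseteq> supp_on m"
  unfolding cube_hull by (rule hull_minimal[of _ _ convex, OF Vc_supp affine_imp_convex[OF affine_supp_on]])

lemma midpoint_in_hull:
  assumes "a \<in> S" "b \<in> S" shows "(1/2) *\<^sub>R a + (1/2) *\<^sub>R b \<in> convex hull S"
proof -
  have "a \<in> convex hull S" "b \<in> convex hull S" using assms by (auto intro: hull_inc)
  thus ?thesis using convex_convex_hull[of S] unfolding convex_def by force
qed

lemma cube_0: "0 \<in> cube_std m"
proof -
  define s where "s = (\<lambda>i::nat. if i \<in> {1..m} then 1 else (0::real))"
  have "s \<in> Vc m" "-s \<in> Vc m" by (auto simp: s_def Vc_def)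
  from midpoint_in_hull[OF this] have "(1/2) *\<^sub>R s + (1/2) *\<^sub>R (-s) \<in> cube_std m"
    by (simp add: cube_hull)
  thus ?thesis by (simp add: scaleR_minus_right)
qed

lemma cube_unitv: assumes "k \<in> {1..m}" shows "unitv k \<in> cube_std m"
proof -
  define s where "s = (\<lambda>i::nat. if i \<in> {1..m} then 1 else (0::real))"
  define s' where "s' = (\<lambda>i::nat. if i \<in> {1..m} then (if i = k then 1 else -1) else (0::real))"
  have "s \<in> Vc m" "s' \<in> Vc m" by (auto simp: s_def s'_def Vc_def)
  from midpoint_in_hull[OF this] have "(1/2) *\<^sub>R s + (1/2) *\<^sub>R s' \<in> cube_std m"
    by (simp add: cube_hull)
  moreover have "(1/2) *\<^sub>R s + (1/2) *\<^sub>R s' = unitv k"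
    using assms by (auto simp: s_def s'_def unitv_def fun_eq_iff)
  ultimately show ?thesis by simp
qed

lemma aff_cube: "affine hull cube_std m = supp_on m"
  by (rule affine_hull_eq_supp[OF cube_supp cube_0 cube_unitv])

section \<open>Simplex\<close>

definition Dn :: "nat \<Rightarrow> (nat \<Rightarrow> real) set" where
  "Dn n = {y \<in> supp_on n. (\<forall>j\<in>{1..n}. 0 \<le> y j) \<and> (\<Sum>j\<in>{1..n}. y j) \<le> 1}"

lemma convex_Dn: "convex (Dn n)"
  unfolding convex_def
proof (intro ballI allI impI)
  fix x y u v assume xy: "x \<in> Dn n" "y \<in> Dn n" and uv: "0 \<le> (u::real)" "0 \<le> v" "u + v = 1"
  have "(\<Sum>j\<in>{1..n}. u * x j + v * y j) = u * (\<Sum>j\<in>{1..n}. x j) + v * (\<Sum>j\<in>{1..n}. y j)"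
    by (simp add: sum.distrib sum_distrib_left)
  also have "\<dots> \<le> u * 1 + v * 1"
    using xy uv by (intro add_mono mult_left_mono) (auto simp: Dn_def)
  finally show "u *\<^sub>R x + v *\<^sub>R y \<in> Dn n"
    using xy uv by (auto simp: Dn_def supp_on_def)
qed

lemma simplex_Dn: "simplex_std n = Dn n"
proof
  show "simplex_std n \<subseteq> Dn n"
    unfolding simplex_std_def
  proof (rule hull_minimal[of _ _ convex, OF _ convex_Dn])
    show "insert 0 {unitv i |i. i \<in> {1..n}} \<subseteq> Dn n"
    proof -
      have "\<And>i. i \<in> {1..n} \<Longrightarrow> (\<Sum>j\<in>{1..n}. unitv i j) = 1"
        by (simp add: unitv_def)
      thus ?thesis by (auto simp: Dn_def supp_on_def unitv_def)
    qed
  qed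
  show "Dn n \<subseteq> simplex_std n"
  proof
    fix y assume y: "y \<in> Dn n"
    define w where "w = (\<lambda>j::nat. if j = 0 then (0::nat\<Rightarrow>real) else unitv j)"
    define a where "a = (\<lambda>j::nat. if j = 0 then 1 - (\<Sum>j\<in>{1..n}. y j) else y j)"
    have I: "{0..n} = insert 0 {1..n}" by auto
    have "(\<Sum>j\<in>{0..n}. a j *\<^sub>R w j) \<in> simplex_std n"
      unfolding simplex_std_def
    proof (rule convex_sum)
      show "sum a {0..n} = 1" unfolding I by (simp add: a_def)
      show "\<And>i. i \<in> {0..n} \<Longrightarrow> 0 \<le> a i" using y by (auto simp: a_def Dn_def)
      show "\<And>i. i \<in> {0..n} \<Longrightarrow> w i \<in> convex hull insert 0 {unitv i |i. i \<in> {1..n}}"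
        by (rule hull_inc) (auto simp: w_def)
    qed auto
    moreover have "(\<Sum>j\<in>{0..n}. a j *\<^sub>R w j) = (\<Sum>j\<in>{1..n}. y j *\<^sub>R unitv j)"
      unfolding I by (simp add: a_def w_def)
    ultimately show "y \<in> simplex_std n" using supp_on_expand[of y n] y by (simp add: Dn_def)
  qed
qed

lemma aff_simplex: "affine hull simplex_std n = supp_on n"
proof (rule affine_hull_eq_supp)
  show "simplex_std n \<subseteq> supp_on n" by (auto simp: simplex_Dn Dn_def)
  show "0 \<in> simplex_std n" by (simp add: simplex_std_def hull_inc)
  show "\<And>k. k \<in> {1..n} \<Longrightarrow> unitv k \<in> simplex_std n"
    by (auto simp: simplex_std_def intro!: hull_inc)
qed




lemma eS_Inl [simp]: "eS i (Inl j) = (if j = i then 1 else 0)" by (simp add: eS_def)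
lemma eS_Inr [simp]: "eS i (Inr x) = 0" by (simp add: eS_def)
lemma eD_Inl [simp]: "eD i k (Inl j) = 0" by (simp add: eD_def)
lemma eD_Inr [simp]: "eD i k (Inr (j, l)) = (if j = i \<and> l = k then 1 else 0)" by (auto simp: eD_def)
lemma times_ind [simp]: "(x::real) * (if P then 1 else 0) = (if P then x else 0)" by simp
lemma sum_if_out [simp]: "(\<Sum>j\<in>A. if P then f j else 0) = (if P then sum f A else 0)" by auto

definition goodidx :: "nat \<Rightarrow> nat \<Rightarrow> nat + nat \<times> nat \<Rightarrow> bool" where
  "goodidx n m z = (case z of Inl i \<Rightarrow> i \<in> {1..n} | Inr (i, k) \<Rightarrow> i \<in> {1..n} \<and> k \<in> {1..m})"

definition Lfun :: "nat \<Rightarrow> (nat + nat \<times> nat \<Rightarrow> real) \<Rightarrow> (nat \<Rightarrow> real) \<Rightarrow> nat \<Rightarrow> real" where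
  "Lfun m p s j = p (Inl j) + (\<Sum>k\<in>{1..m}. s k * p (Inr (j, k)))"

definition Ineq :: "nat \<Rightarrow> nat \<Rightarrow> (nat + nat \<times> nat \<Rightarrow> real) set" where
  "Ineq n m = {p. (\<forall>z. \<not> goodidx n m z \<longrightarrow> p z = 0) \<and>
      (\<forall>s\<in>Vc m. (\<forall>j\<in>{1..n}. 0 \<le> Lfun m p s j) \<and> (\<Sum>j\<in>{1..n}. Lfun m p s j) \<le> 2)}"

lemma Lfun_add [simp]: "Lfun m (p + q) s j = Lfun m p s j + Lfun m q s j"
  by (simp add: Lfun_def sum.distrib algebra_simps)
lemma Lfun_diff [simp]: "Lfun m (p - q) s j = Lfun m p s j - Lfun m q s j"
  by (simp add: Lfun_def sum_subtractf algebra_simps)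
lemma Lfun_scale [simp]: "Lfun m (c *\<^sub>R p) s j = c * Lfun m p s j"
  by (simp add: Lfun_def sum_distrib_left algebra_simps)
lemma Lfun_zero [simp]: "Lfun m 0 s j = 0"
  by (simp add: Lfun_def)
lemma Lfun_eS [simp]: "Lfun m (eS i) s j = (if j = i then 1 else 0)"
  by (simp add: Lfun_def)
lemma Lfun_eD [simp]: "Lfun m (eD i k) s j = (if j = i \<and> k \<in> {1..m} then s k else 0)"
proof -
  have "Lfun m (eD i k) s j = (\<Sum>l\<in>{1..m}. if j = i then (if l = k then s k else 0) else 0)"
    unfolding Lfun_def by (auto intro!: sum.cong)
  thus ?thesis by auto
qed

lemma convex_Ineq: "convex (Ineq n m)"
  unfolding convex_def
proof (intro ballI allI impI)
  fix p q u v assume pq: "p \<in> Ineq n m" "q \<in> Ineq n m" and uv: "0 \<le> (u::real)" "0 \<le> v" "u + v = 1"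
  have 1: "\<forall>z. \<not> goodidx n m z \<longrightarrow> (u *\<^sub>R p + v *\<^sub>R q) z = 0" using pq by (auto simp: Ineq_def)
  have 2: "0 \<le> Lfun m (u *\<^sub>R p + v *\<^sub>R q) s j" if "s \<in> Vc m" "j \<in> {1..n}" for s j
    using pq that uv by (auto simp: Ineq_def intro!: add_nonneg_nonneg mult_nonneg_nonneg)
  have 3: "(\<Sum>j\<in>{1..n}. Lfun m (u *\<^sub>R p + v *\<^sub>R q) s j) \<le> 2" if "s \<in> Vc m" for s
  proof -
    have "(\<Sum>j\<in>{1..n}. Lfun m (u *\<^sub>R p + v *\<^sub>R q) s j)
        = u * (\<Sum>j\<in>{1..n}. Lfun m p s j) + v * (\<Sum>j\<in>{1..n}. Lfun m q s j)"
      by (simp add: sum.distrib sum_distrib_left)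
    also have "\<dots> \<le> u * 2 + v * 2"
      using pq that uv by (intro add_mono mult_left_mono) (auto simp: Ineq_def)
    finally show ?thesis using uv by (simp add: algebra_simps)
  qed
  show "u *\<^sub>R p + v *\<^sub>R q \<in> Ineq n m" using 1 2 3 by (simp add: Ineq_def)
qed

lemma Vc_sign: "s \<in> Vc m \<Longrightarrow> k \<in> {1..m} \<Longrightarrow> s k = 1 \<or> s k = -1"
  by (auto simp: Vc_def)

lemma hom_pts_Ineq: "hom_pts n m \<subseteq> Ineq n m"
proof
  fix p assume p: "p \<in> hom_pts n m"
  show "p \<in> Ineq n m"
    using p unfolding hom_pts_def
  proof (elim UnE CollectE exE conjE insertE)
    assume "p = 0" thus ?thesis by (simp add: Ineq_def)
  next
    fix i assume "p = 2 *\<^sub>R eS i" "i \<in> {1..n}"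
    thus ?thesis by (auto simp: Ineq_def goodidx_def split: sum.splits)
  next
    fix i k assume pk: "p = eS i + eD i k" "i \<in> {1..n}" "k \<in> {1..m}"
    have b: "\<And>s. s \<in> Vc m \<Longrightarrow> -1 \<le> s k \<and> s k \<le> 1" using Vc_sign[OF _ pk(3)] by force
    show ?thesis using pk
      by (auto simp: Ineq_def goodidx_def sum.distrib sum_subtractf split: sum.splits) (drule b, linarith)+
  next
    fix i k assume pk: "p = eS i - eD i k" "i \<in> {1..n}" "k \<in> {1..m}"
    have b: "\<And>s. s \<in> Vc m \<Longrightarrow> -1 \<le> s k \<and> s k \<le> 1" using Vc_sign[OF _ pk(3)] by force
    show ?thesis using pk
      by (auto simp: Ineq_def goodidx_def sum.distrib sum_subtractf split: sum.splits) (drule b, linarith)+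
  next
    fix i j k assume pk: "p = (eS i + eS j) + (eD i k - eD j k)" "i \<in> {1..n}" "j \<in> {1..n}" "i \<noteq> j" "k \<in> {1..m}"
    have b: "\<And>s. s \<in> Vc m \<Longrightarrow> -1 \<le> s k \<and> s k \<le> 1" using Vc_sign[OF _ pk(5)] by force
    show ?thesis using pk
      by (auto simp: Ineq_def goodidx_def sum.distrib sum_subtractf split: sum.splits) (drule b, linarith)+
  qed simp
qed

lemma hull_Ineq: "convex hull hom_pts n m \<subseteq> Ineq n m"
  by (rule hull_minimal[of _ _ convex, OF hom_pts_Ineq convex_Ineq])




definition hmap :: "nat \<Rightarrow> nat \<Rightarrow> ((nat\<Rightarrow>real) \<Rightarrow> (nat\<Rightarrow>real)) \<Rightarrow> (nat + nat \<times> nat \<Rightarrow> real)" where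
 "hmap n m f = (\<lambda>z. case z of Inl i \<Rightarrow> if i \<in> {1..n} then 2 * f 0 i else 0
     | Inr (i,k) \<Rightarrow> if i \<in> {1..n} \<and> k \<in> {1..m} then f (unitv k) i - f (- unitv k) i else 0)"

lemma hmap_affine: "affine_map_on UNIV (hmap n m)"
  unfolding affine_map_on_def
proof (intro ballI allI)
  fix f g :: "(nat\<Rightarrow>real) \<Rightarrow> (nat\<Rightarrow>real)" and u :: real
  show "hmap n m ((1 - u) *\<^sub>R f + u *\<^sub>R g) = (1 - u) *\<^sub>R hmap n m f + u *\<^sub>R hmap n m g"
    by (rule ext) (auto simp: hmap_def algebra_simps split: sum.splits)
qed

lemma Hom_iff: "f \<in> Hom (cube_std m) (simplex_std n) \<longleftrightarrow>
   affine_map_on (supp_on m) f \<and> f ` supp_on m \<subseteq> supp_on n \<and> f ` cube_std m \<subseteq> Dn n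
   \<and> (\<forall>x. x \<notin> supp_on m \<longrightarrow> f x = 0)"
  unfolding Hom_def aff_cube aff_simplex unfolding simplex_Dn by simp

lemma zero_supp [simp]: "0 \<in> supp_on m" by (simp add: supp_on_def)

lemma Hom_expand:
  assumes f: "f \<in> Hom (cube_std m) (simplex_std n)" and x: "x \<in> supp_on m"
  shows "f x = f 0 + (\<Sum>k\<in>{1..m}. x k *\<^sub>R (f (unitv k) - f 0))"
proof -
  have aff: "affine_map_on (supp_on m) f" using f by (simp add: Hom_iff)
  have "f (\<Sum>k\<in>{1..m}. x k *\<^sub>R unitv k) = f 0 + (\<Sum>k\<in>{1..m}. x k *\<^sub>R (f (unitv k) - f 0))"
    by (rule affmap_lincomb[OF affine_supp_on aff zero_supp]) (auto intro: unitv_supp)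
  thus ?thesis using supp_on_expand[OF x] by simp
qed

lemma Hom_neg:
  assumes f: "f \<in> Hom (cube_std m) (simplex_std n)" and k: "k \<in> {1..m}"
  shows "f (- unitv k) = f 0 - (f (unitv k) - f 0)"
proof -
  have aff: "affine_map_on (supp_on m) f" using f by (simp add: Hom_iff)
  have "f ((-1) *\<^sub>R unitv k) = f 0 + (-1) *\<^sub>R (f (unitv k) - f 0)"
    by (rule affmap_scale[OF aff zero_supp unitv_supp[OF k]])
  thus ?thesis by simp
qed

lemma Hom_supp:
  assumes f: "f \<in> Hom (cube_std m) (simplex_std n)" and x: "x \<in> supp_on m" and j: "j \<notin> {1..n}"
  shows "f x j = 0"
  using assms by (auto simp: Hom_iff supp_on_def)

lemma hmap_Inr:
  assumes f: "f \<in> Hom (cube_std m) (simplex_std n)" and "i \<in> {1..n}" "k \<in> {1..m}"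
  shows "hmap n m f (Inr (i,k)) = 2 * (f (unitv k) i - f 0 i)"
  using assms Hom_neg[OF f] by (simp add: hmap_def)

lemma hmap_Inl:
  assumes "i \<in> {1..n}"
  shows "hmap n m f (Inl i) = 2 * f 0 i"
  using assms by (simp add: hmap_def)

lemma hmap_inj: "inj_on (hmap n m) (Hom (cube_std m) (simplex_std n))"
proof (rule inj_onI)
  fix f g assume f: "f \<in> Hom (cube_std m) (simplex_std n)" and g: "g \<in> Hom (cube_std m) (simplex_std n)"
    and eq: "hmap n m f = hmap n m g"
  have c: "f 0 = g 0"
  proof
    fix j show "f 0 j = g 0 j"
    proof (cases "j \<in> {1..n}")
      case True thus ?thesis using fun_cong[OF eq, of "Inl j"] by (simp add: hmap_Inl)
    next
      case False thus ?thesis using Hom_supp[OF f zero_supp] Hom_supp[OF g zero_supp] by simp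
    qed
  qed
  have d: "f (unitv k) = g (unitv k)" if k: "k \<in> {1..m}" for k
  proof
    fix j show "f (unitv k) j = g (unitv k) j"
    proof (cases "j \<in> {1..n}")
      case True thus ?thesis using fun_cong[OF eq, of "Inr (j,k)"] hmap_Inr[OF f True k] hmap_Inr[OF g True k] c
        by simp
    next
      case False thus ?thesis using Hom_supp[OF f unitv_supp[OF k]] Hom_supp[OF g unitv_supp[OF k]] by simp
    qed
  qed
  show "f = g"
  proof
    fix x show "f x = g x"
    proof (cases "x \<in> supp_on m")
      case True
      have "(\<Sum>k\<in>{1..m}. x k *\<^sub>R (f (unitv k) - f 0)) = (\<Sum>k\<in>{1..m}. x k *\<^sub>R (g (unitv k) - g 0))"
        by (rule sum.cong) (simp_all add: c d)
      thus ?thesis using Hom_expand[OF f True] Hom_expand[OF g True] c by simp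
    next
      case False thus ?thesis using f g by (simp add: Hom_iff)
    qed
  qed
qed

definition cpt :: "nat \<Rightarrow> (nat + nat \<times> nat \<Rightarrow> real) \<Rightarrow> nat \<Rightarrow> real" where
  "cpt n p = (\<lambda>j. if j \<in> {1..n} then p (Inl j) / 2 else 0)"
definition dpt :: "nat \<Rightarrow> (nat + nat \<times> nat \<Rightarrow> real) \<Rightarrow> nat \<Rightarrow> nat \<Rightarrow> real" where
  "dpt n p k = (\<lambda>j. if j \<in> {1..n} then p (Inr (j,k)) / 2 else 0)"
definition fp :: "nat \<Rightarrow> nat \<Rightarrow> (nat + nat \<times> nat \<Rightarrow> real) \<Rightarrow> (nat \<Rightarrow> real) \<Rightarrow> nat \<Rightarrow> real" where
  "fp n m p = (\<lambda>x. if x \<in> supp_on m then cpt n p + (\<Sum>k\<in>{1..m}. x k *\<^sub>R dpt n p k) else 0)"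

lemma mult_if_zero [simp]: "(x::real) * (if P then a else 0) = (if P then x * a else 0)" by simp

lemma fp_affine: "affine_map_on (supp_on m) (fp n m p)"
  unfolding affine_map_on_def
proof (intro ballI allI)
  fix x y u assume x: "x \<in> supp_on m" and y: "y \<in> supp_on m"
  have xy: "(1 - u) *\<^sub>R x + u *\<^sub>R y \<in> supp_on m"
    using affine_supp_on[of m] x y unfolding affine_def by simp
  have lin: "(\<Sum>k\<in>{1..m}. ((1 - u) *\<^sub>R x + u *\<^sub>R y) k *\<^sub>R dpt n p k)
      = (1 - u) *\<^sub>R (\<Sum>k\<in>{1..m}. x k *\<^sub>R dpt n p k) + u *\<^sub>R (\<Sum>k\<in>{1..m}. y k *\<^sub>R dpt n p k)"
    by (simp add: scaleR_add_left sum.distrib scaleR_sum_right)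
  show "fp n m p ((1 - u) *\<^sub>R x + u *\<^sub>R y) = (1 - u) *\<^sub>R fp n m p x + u *\<^sub>R fp n m p y"
    using x y xy lin by (simp add: fp_def algebra_simps)
qed

lemma fp_eval:
  "cpt n p j + (\<Sum>k\<in>{1..m}. x k *\<^sub>R dpt n p k) j = (if j \<in> {1..n} then Lfun m p x j / 2 else 0)"
  by (simp add: cpt_def dpt_def Lfun_def sum_apply_fun sum_divide_distrib add_divide_distrib)

lemma fp_Hom:
  assumes p: "p \<in> Ineq n m"
  shows "fp n m p \<in> Hom (cube_std m) (simplex_std n)"
  unfolding Hom_iff
proof (intro conjI)
  show aff: "affine_map_on (supp_on m) (fp n m p)" by (rule fp_affine)
  show "fp n m p ` supp_on m \<subseteq> supp_on n"
  proof (clarify)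
    fix x assume x: "x \<in> supp_on m"
    show "fp n m p x \<in> supp_on n" unfolding supp_on_def
    proof (intro CollectI allI impI)
      fix j assume j: "j \<notin> {1..n}"
      have "fp n m p x j = cpt n p j + (\<Sum>k\<in>{1..m}. x k *\<^sub>R dpt n p k) j" using x by (simp add: fp_def)
      also have "\<dots> = 0" unfolding fp_eval using j by auto
      finally show "fp n m p x j = 0" .
    qed
  qed
  show "\<forall>x. x \<notin> supp_on m \<longrightarrow> fp n m p x = 0" by (simp add: fp_def)
  let ?K = "{x \<in> supp_on m. fp n m p x \<in> Dn n}"
  have cK: "convex ?K"
    unfolding convex_def
  proof (intro ballI allI impI)
    fix x y u v assume x: "x \<in> ?K" and y: "y \<in> ?K" and uv: "0 \<le> (u::real)" "0 \<le> v" "u + v = 1"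
    have u: "u = 1 - v" using uv by simp
    have xy: "u *\<^sub>R x + v *\<^sub>R y \<in> supp_on m"
      using affine_supp_on[of m] x y uv unfolding affine_def by simp
    have "fp n m p (u *\<^sub>R x + v *\<^sub>R y) = u *\<^sub>R fp n m p x + v *\<^sub>R fp n m p y"
      using aff x y unfolding affine_map_on_def u by simp
    moreover have "u *\<^sub>R fp n m p x + v *\<^sub>R fp n m p y \<in> Dn n"
      using convex_Dn[of n] x y uv unfolding convex_def by simp
    ultimately show "u *\<^sub>R x + v *\<^sub>R y \<in> ?K" using xy by simp
  qed
  have VK: "Vc m \<subseteq> ?K"
  proof
    fix s assume s: "s \<in> Vc m"
    have ss: "s \<in> supp_on m" using s Vc_supp by blast
    have L: "\<forall>j\<in>{1..n}. 0 \<le> Lfun m p s j" "(\<Sum>j\<in>{1..n}. Lfun m p s j) \<le> 2"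
      using p s by (auto simp: Ineq_def)
    have "(\<Sum>j\<in>{1..n}. Lfun m p s j / 2) \<le> 1" using L(2) by (simp add: sum_divide_distrib[symmetric])
    have fs: "fp n m p s = (\<lambda>j. if j \<in> {1..n} then Lfun m p s j / 2 else 0)"
    proof
      fix j
      have "fp n m p s j = cpt n p j + (\<Sum>k\<in>{1..m}. s k *\<^sub>R dpt n p k) j" using ss by (simp add: fp_def)
      thus "fp n m p s j = (if j \<in> {1..n} then Lfun m p s j / 2 else 0)" unfolding fp_eval .
    qed
    moreover have "(\<Sum>j\<in>{1..n}. (if j \<in> {1..n} then Lfun m p s j / 2 else 0)) \<le> 1"
      using L(2) by (simp add: sum_divide_distrib[symmetric])
    ultimately show "s \<in> ?K" using ss L(1) by (auto simp: Dn_def supp_on_def)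
  qed
  have "cube_std m \<subseteq> ?K" unfolding cube_hull by (rule hull_minimal[of _ _ convex, OF VK cK])
  thus "fp n m p ` cube_std m \<subseteq> Dn n" by auto
qed

lemma hmap_fp:
  assumes p: "p \<in> Ineq n m"
  shows "hmap n m (fp n m p) = p"
proof
  fix z
  have f0: "fp n m p 0 = cpt n p" by (simp add: fp_def)
  have fu: "fp n m p (unitv k) = cpt n p + dpt n p k" if k: "k \<in> {1..m}" for k
  proof -
    have "(\<Sum>l\<in>{1..m}. unitv k l *\<^sub>R dpt n p l) = (\<Sum>l\<in>{1..m}. if l = k then dpt n p k else 0)"
      by (rule sum.cong) (auto simp: unitv_def)
    thus ?thesis using k unitv_supp[OF k] by (simp add: fp_def)
  qed
  have fu': "fp n m p (- unitv k) = cpt n p - dpt n p k" if k: "k \<in> {1..m}" for k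
  proof -
    have m: "- unitv k \<in> supp_on m" using unitv_supp[OF k] by (simp add: supp_on_def)
    have "(\<Sum>l\<in>{1..m}. (- unitv k) l *\<^sub>R dpt n p l) = (\<Sum>l\<in>{1..m}. if l = k then - dpt n p k else 0)"
      by (rule sum.cong) (auto simp: unitv_def)
    thus ?thesis using k m by (simp add: fp_def)
  qed
  have sp: "\<not> goodidx n m z \<Longrightarrow> p z = 0" using p by (simp add: Ineq_def)
  show "hmap n m (fp n m p) z = p z"
  proof (cases z)
    case (Inl i) thus ?thesis using sp by (auto simp: hmap_def f0 cpt_def goodidx_def)
  next
    case (Inr ik)
    then obtain i k where z: "z = Inr (i,k)" by (cases ik) auto
    show ?thesis using sp fu fu' by (auto simp: z hmap_def cpt_def dpt_def goodidx_def)
  qed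
qed

lemma convex_Hom: "convex (Hom (cube_std m) (simplex_std n))"
  unfolding convex_def
proof (intro ballI allI impI)
  fix f g u v assume f: "f \<in> Hom (cube_std m) (simplex_std n)" and g: "g \<in> Hom (cube_std m) (simplex_std n)"
    and uv: "0 \<le> (u::real)" "0 \<le> v" "u + v = 1"
  have af: "affine_map_on (supp_on m) f" and ag: "affine_map_on (supp_on m) g" using f g by (auto simp: Hom_iff)
  have 1: "affine_map_on (supp_on m) (u *\<^sub>R f + v *\<^sub>R g)"
    unfolding affine_map_on_def
  proof (intro ballI allI)
    fix x y t assume x: "x \<in> supp_on m" and y: "y \<in> supp_on m"
    have eqf: "f ((1 - t) *\<^sub>R x + t *\<^sub>R y) = (1 - t) *\<^sub>R f x + t *\<^sub>R f y"
      and eqg: "g ((1 - t) *\<^sub>R x + t *\<^sub>R y) = (1 - t) *\<^sub>R g x + t *\<^sub>R g y"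
      using af ag x y unfolding affine_map_on_def by blast+
    show "(u *\<^sub>R f + v *\<^sub>R g) ((1 - t) *\<^sub>R x + t *\<^sub>R y) =
          (1 - t) *\<^sub>R (u *\<^sub>R f + v *\<^sub>R g) x + t *\<^sub>R (u *\<^sub>R f + v *\<^sub>R g) y"
      apply (simp only: plus_fun_apply scaleR_apply eqf eqg)
      by (simp add: algebra_simps)
  qed
  have 2: "(u *\<^sub>R f + v *\<^sub>R g) ` supp_on m \<subseteq> supp_on n"
    using f g by (auto simp: Hom_iff supp_on_def image_subset_iff)
  have 3: "(u *\<^sub>R f + v *\<^sub>R g) ` cube_std m \<subseteq> Dn n"
  proof (clarsimp)
    fix x assume "x \<in> cube_std m"
    hence "f x \<in> Dn n" "g x \<in> Dn n" using f g by (auto simp: Hom_iff)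
    thus "u *\<^sub>R f x + v *\<^sub>R g x \<in> Dn n" using convex_Dn[of n] uv unfolding convex_def by blast
  qed
  have 4: "\<forall>x. x \<notin> supp_on m \<longrightarrow> (u *\<^sub>R f + v *\<^sub>R g) x = 0" using f g by (simp add: Hom_iff)
  show "u *\<^sub>R f + v *\<^sub>R g \<in> Hom (cube_std m) (simplex_std n)" using 1 2 3 4 by (simp add: Hom_iff)
qed




definition "yp y k i = max ((y::nat\<Rightarrow>nat\<Rightarrow>real) k i) 0"
definition "yn y k i = max (- (y::nat\<Rightarrow>nat\<Rightarrow>real) k i) 0"
definition "PP n y k = (\<Sum>i\<in>{1..n}. yp y k i)"
definition "NN n y k = (\<Sum>i\<in>{1..n}. yn y k i)"
definition "MM n y k = max (PP n y k) (NN n y k)"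
definition "tt n y k i j = yp y k i * yn y k j / MM n y k"
definition "sp n y k i = yp y k i * (1 - NN n y k / MM n y k)"
definition "sn n y k i = yn y k i * (1 - PP n y k / MM n y k)"
definition "pairv i j k = (eS i + eS j) + (eD i k - eD j k)"
definition "col n y k = (\<Sum>i\<in>{1..n}. \<Sum>j\<in>{1..n}. tt n y k i j *\<^sub>R pairv i j k)
   + (\<Sum>i\<in>{1..n}. sp n y k i *\<^sub>R (eS i + eD i k)) + (\<Sum>i\<in>{1..n}. sn n y k i *\<^sub>R (eS i - eD i k))"

lemma yp_yn: "yp y k i - yn y k i = y k i" "yp y k i + yn y k i = \<bar>y k i\<bar>"
  "yp y k i * yn y k i = 0" "0 \<le> yp y k i" "0 \<le> yn y k i"
  by (auto simp: yp_def yn_def)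

lemma PP_NN_nonneg: "0 \<le> PP n y k" "0 \<le> NN n y k"
  by (auto simp: PP_def NN_def yp_yn intro: sum_nonneg)

lemma sum_tt_row: "(\<Sum>j\<in>{1..n}. tt n y k a j) = yp y k a * NN n y k / MM n y k"
  by (simp add: tt_def NN_def sum_divide_distrib[symmetric] sum_distrib_left)

lemma sum_tt_col: "(\<Sum>i\<in>{1..n}. tt n y k i a) = PP n y k * yn y k a / MM n y k"
  by (simp add: tt_def PP_def sum_divide_distrib[symmetric] sum_distrib_right)

lemma col_Inl: "col n y k (Inl a) = (if a \<in> {1..n} then yp y k a + yn y k a else 0)"
proof -
  have "col n y k (Inl a) = (\<Sum>i\<in>{1..n}. \<Sum>j\<in>{1..n}. (if a = i then tt n y k i j else 0) + (if a = j then tt n y k i j else 0))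
     + (\<Sum>i\<in>{1..n}. if a = i then sp n y k i else 0) + (\<Sum>i\<in>{1..n}. if a = i then sn n y k i else 0)"
    by (simp add: col_def pairv_def sum_apply_fun distrib_left) (auto intro!: sum.cong)
  also have "\<dots> = (if a \<in> {1..n} then (\<Sum>j\<in>{1..n}. tt n y k a j) + (\<Sum>i\<in>{1..n}. tt n y k i a) + sp n y k a + sn n y k a else 0)"
    by (simp add: sum.distrib)
  also have "\<dots> = (if a \<in> {1..n} then yp y k a + yn y k a else 0)"
    by (simp add: sum_tt_row[simplified] sum_tt_col[simplified] sp_def sn_def algebra_simps)
  finally show ?thesis .
qed

lemma col_Inr: "col n y k (Inr (a,b)) = (if a \<in> {1..n} \<and> b = k then y k a else 0)"
proof (cases "b = k")
  case False thus ?thesis by (simp add: col_def pairv_def sum_apply_fun)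
next
  case True
  have "col n y k (Inr (a,b)) = (\<Sum>i\<in>{1..n}. \<Sum>j\<in>{1..n}. (if a = i then tt n y k i j else 0) - (if a = j then tt n y k i j else 0))
     + (\<Sum>i\<in>{1..n}. if a = i then sp n y k i else 0) - (\<Sum>i\<in>{1..n}. if a = i then sn n y k i else 0)"
    using True by (simp add: col_def pairv_def sum_apply_fun right_diff_distrib sum_subtractf sum_negf)
  also have "\<dots> = (if a \<in> {1..n} then (\<Sum>j\<in>{1..n}. tt n y k a j) - (\<Sum>i\<in>{1..n}. tt n y k i a) + sp n y k a - sn n y k a else 0)"
    by (simp add: sum_subtractf)
  also have "\<dots> = (if a \<in> {1..n} then yp y k a - yn y k a else 0)"
    by (simp add: sum_tt_row[simplified] sum_tt_col[simplified] sp_def sn_def algebra_simps)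
  finally show ?thesis using True yp_yn(1) by simp
qed

definition "uu n m x y i = x i - (\<Sum>k\<in>{1..m}. yp y k i + yn y k i)"
definition "Rv n m x y = (\<Sum>i\<in>{1..n}. (uu n m x y i / 2) *\<^sub>R (2 *\<^sub>R eS i)) + (\<Sum>k\<in>{1..m}. col n y k)"

lemma Rv_Inl: "Rv n m x y (Inl a) = (if a \<in> {1..n} then x a else 0)"
proof -
  have "Rv n m x y (Inl a) = (\<Sum>i\<in>{1..n}. if a = i then uu n m x y i else 0) + (\<Sum>k\<in>{1..m}. col n y k (Inl a))"
    by (simp add: Rv_def sum_apply_fun)
  also have "\<dots> = (if a \<in> {1..n} then x a else 0)"
    by (simp add: col_Inl uu_def)
  finally show ?thesis .
qed

lemma Rv_Inr: "Rv n m x y (Inr (a,b)) = (if a \<in> {1..n} \<and> b \<in> {1..m} then y b a else 0)"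
proof -
  have "Rv n m x y (Inr (a,b)) = (\<Sum>k\<in>{1..m}. col n y k (Inr (a,b)))"
    by (simp add: Rv_def sum_apply_fun)
  also have "\<dots> = (\<Sum>k\<in>{1..m}. if b = k then (if a \<in> {1..n} then y k a else 0) else 0)"
    by (rule sum.cong) (auto simp: col_Inr)
  also have "\<dots> = (if a \<in> {1..n} \<and> b \<in> {1..m} then y b a else 0)"
    by simp
  finally show ?thesis .
qed

definition Gs :: "'a::real_vector set \<Rightarrow> real \<Rightarrow> 'a set" where
  "Gs C w = {w *\<^sub>R q | q. q \<in> C}"

lemma Gs_add:
  assumes C: "convex C" and w: "0 \<le> w1" "0 \<le> w2" and v: "v1 \<in> Gs C w1" "v2 \<in> Gs C w2"
  shows "v1 + v2 \<in> Gs C (w1 + w2)"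
proof -
  obtain q1 q2 where q: "q1 \<in> C" "q2 \<in> C" "v1 = w1 *\<^sub>R q1" "v2 = w2 *\<^sub>R q2" using v by (auto simp: Gs_def)
  show ?thesis
  proof (cases "w1 + w2 = 0")
    case True
    hence "w1 = 0" "w2 = 0" using w by auto
    thus ?thesis using q by (auto simp: Gs_def)
  next
    case False
    hence pos: "w1 + w2 > 0" using w by auto
    define q where "q = (w1 / (w1 + w2)) *\<^sub>R q1 + (w2 / (w1 + w2)) *\<^sub>R q2"
    have "q \<in> C" unfolding q_def
      using C q w pos unfolding convex_def by (auto simp: add_divide_distrib[symmetric])
    moreover have "v1 + v2 = (w1 + w2) *\<^sub>R q"
      using pos by (simp add: q q_def scaleR_add_right)
    ultimately show ?thesis by (auto simp: Gs_def)
  qed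
qed

lemma Gs_zero: "0 \<in> C \<Longrightarrow> 0 \<in> Gs C 0"
  by (force simp: Gs_def)

lemma Gs_sum:
  assumes C: "convex C" "0 \<in> C" and I: "finite I" and h: "\<And>i. i \<in> I \<Longrightarrow> 0 \<le> w i \<and> v i \<in> Gs C (w i)"
  shows "sum v I \<in> Gs C (sum w I)"
  using I h
proof (induction I rule: finite_induct)
  case empty thus ?case using Gs_zero[OF C(2)] by simp
next
  case (insert a F)
  have "v a + sum v F \<in> Gs C (w a + sum w F)"
    using insert by (intro Gs_add[OF C(1)]) (auto intro: sum_nonneg)
  thus ?case using insert by simp
qed

lemma Gs_mono:
  assumes C: "convex C" "0 \<in> C" and w: "0 \<le> w" "w \<le> w'" and v: "v \<in> Gs C w"
  shows "v \<in> Gs C w'"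
proof -
  obtain q where q: "q \<in> C" "v = w *\<^sub>R q" using v by (auto simp: Gs_def)
  show ?thesis
  proof (cases "w' = 0")
    case True thus ?thesis using w q by (auto simp: Gs_def)
  next
    case False
    hence pos: "w' > 0" using w by auto
    define q' where "q' = (w / w') *\<^sub>R q + (1 - w / w') *\<^sub>R 0"
    have "w / w' \<le> 1" using w pos by simp
    hence "q' \<in> C" unfolding q'_def using w pos by (intro convexD[OF C(1) q(1) C(2)]) auto
    moreover have "v = w' *\<^sub>R q'" using pos by (simp add: q q'_def)
    ultimately show ?thesis by (auto simp: Gs_def)
  qed
qed

lemma Gs_pt:
  assumes "0 \<in> C" "0 \<le> t" "t \<noteq> 0 \<Longrightarrow> q \<in> C"
  shows "t *\<^sub>R q \<in> Gs C t"
  using assms by (cases "t = 0") (force simp: Gs_def)+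

lemma Gs_one: "Gs C 1 = C"
  by (simp add: Gs_def)




lemma ratio_le: "0 \<le> (a::real) \<Longrightarrow> a \<le> M \<Longrightarrow> a / M \<le> 1"
  by (cases "M = 0") auto

lemma weight_eq:
  assumes "0 \<le> (P::real)" "0 \<le> N"
  shows "P * N / max P N + P * (1 - N / max P N) + N * (1 - P / max P N) = (P + N + \<bar>P - N\<bar>) / 2"
proof (cases "P \<le> N")
  case True
  show ?thesis
  proof (cases "N = 0")
    case True thus ?thesis using assms \<open>P \<le> N\<close> by simp
  next
    case False thus ?thesis using assms \<open>P \<le> N\<close> by (simp add: max_def field_simps)
  qed
next
  case False
  hence "P > 0" using assms by simp
  thus ?thesis using assms False by (simp add: max_def field_simps)
qed

lemma hom_pts_0: "0 \<in> hom_pts n m" by (simp add: hom_pts_def)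

lemma decomp:
  assumes A: "\<forall>i\<in>{1..n}. (\<Sum>k\<in>{1..m}. \<bar>y k i\<bar>) \<le> x i"
    and B: "(\<Sum>i\<in>{1..n}. x i) + (\<Sum>k\<in>{1..m}. \<bar>\<Sum>i\<in>{1..n}. y k i\<bar>) \<le> 2"
  shows "Rv n m x y \<in> convex hull hom_pts n m"
proof -
  let ?C = "convex hull hom_pts n m"
  have cC: "convex ?C" by simp
  have C0: "0 \<in> ?C" by (rule hull_inc[OF hom_pts_0])
  have MM0: "0 \<le> MM n y k" for k using PP_NN_nonneg by (simp add: MM_def le_max_iff_disj)
  have r1: "0 \<le> 1 - NN n y k / MM n y k" for k
    using ratio_le[OF PP_NN_nonneg(2), of n y k "MM n y k"] by (simp add: MM_def)
  have r2: "0 \<le> 1 - PP n y k / MM n y k" for k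
    using ratio_le[OF PP_NN_nonneg(1), of n y k "MM n y k"] by (simp add: MM_def)
  define cw where "cw k = (\<Sum>i\<in>{1..n}. \<Sum>j\<in>{1..n}. tt n y k i j) + (\<Sum>i\<in>{1..n}. sp n y k i) + (\<Sum>i\<in>{1..n}. sn n y k i)" for k
  have col: "col n y k \<in> Gs ?C (cw k)" if k: "k \<in> {1..m}" for k
  proof -
    have t0: "0 \<le> tt n y k i j" for i j using MM0 by (simp add: tt_def yp_yn)
    have S1: "(\<Sum>i\<in>{1..n}. \<Sum>j\<in>{1..n}. tt n y k i j *\<^sub>R pairv i j k) \<in> Gs ?C (\<Sum>i\<in>{1..n}. \<Sum>j\<in>{1..n}. tt n y k i j)"
    proof (rule Gs_sum[OF cC C0])
      fix i assume i: "i \<in> {1..n}"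
      have "(\<Sum>j\<in>{1..n}. tt n y k i j *\<^sub>R pairv i j k) \<in> Gs ?C (\<Sum>j\<in>{1..n}. tt n y k i j)"
      proof (rule Gs_sum[OF cC C0])
        fix j assume j: "j \<in> {1..n}"
        have "tt n y k i j *\<^sub>R pairv i j k \<in> Gs ?C (tt n y k i j)"
        proof (rule Gs_pt[OF C0 t0])
          assume nz: "tt n y k i j \<noteq> 0"
          have "i \<noteq> j" using nz yp_yn(3)[of y k i] by (auto simp: tt_def)
          hence "pairv i j k \<in> hom_pts n m" using i j k unfolding hom_pts_def pairv_def by blast
          thus "pairv i j k \<in> ?C" by (rule hull_inc)
        qed
        thus "0 \<le> tt n y k i j \<and> tt n y k i j *\<^sub>R pairv i j k \<in> Gs ?C (tt n y k i j)" using t0 by blast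
      qed simp
      thus "0 \<le> (\<Sum>j\<in>{1..n}. tt n y k i j) \<and> (\<Sum>j\<in>{1..n}. tt n y k i j *\<^sub>R pairv i j k) \<in> Gs ?C (\<Sum>j\<in>{1..n}. tt n y k i j)"
        using t0 by (simp add: sum_nonneg)
    qed simp
    have S2: "(\<Sum>i\<in>{1..n}. sp n y k i *\<^sub>R (eS i + eD i k)) \<in> Gs ?C (\<Sum>i\<in>{1..n}. sp n y k i)"
    proof (rule Gs_sum[OF cC C0])
      fix i assume i: "i \<in> {1..n}"
      have s0: "0 \<le> sp n y k i" using r1[of k] by (simp add: sp_def yp_yn)
      have "eS i + eD i k \<in> hom_pts n m" using i k unfolding hom_pts_def by blast
      hence "eS i + eD i k \<in> ?C" by (rule hull_inc)
      thus "0 \<le> sp n y k i \<and> sp n y k i *\<^sub>R (eS i + eD i k) \<in> Gs ?C (sp n y k i)"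
        using s0 Gs_pt[OF C0 s0] by blast
    qed simp
    have S3: "(\<Sum>i\<in>{1..n}. sn n y k i *\<^sub>R (eS i - eD i k)) \<in> Gs ?C (\<Sum>i\<in>{1..n}. sn n y k i)"
    proof (rule Gs_sum[OF cC C0])
      fix i assume i: "i \<in> {1..n}"
      have s0: "0 \<le> sn n y k i" using r2[of k] by (simp add: sn_def yp_yn)
      have "eS i - eD i k \<in> hom_pts n m" using i k unfolding hom_pts_def by blast
      hence "eS i - eD i k \<in> ?C" by (rule hull_inc)
      thus "0 \<le> sn n y k i \<and> sn n y k i *\<^sub>R (eS i - eD i k) \<in> Gs ?C (sn n y k i)"
        using s0 Gs_pt[OF C0 s0] by blast
    qed simp
    have n1: "0 \<le> (\<Sum>i\<in>{1..n}. \<Sum>j\<in>{1..n}. tt n y k i j)" using t0 by (simp add: sum_nonneg)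
    have n2: "0 \<le> (\<Sum>i\<in>{1..n}. sp n y k i)" using r1[of k] by (simp add: sp_def yp_yn sum_nonneg)
    have n3: "0 \<le> (\<Sum>i\<in>{1..n}. sn n y k i)" using r2[of k] by (simp add: sn_def yp_yn sum_nonneg)
    show ?thesis unfolding col_def cw_def
      by (intro Gs_add[OF cC] S1 S2 S3 n1 n2 n3 add_nonneg_nonneg)
  qed
  have cw_eq: "cw k = (PP n y k + NN n y k + \<bar>\<Sum>i\<in>{1..n}. y k i\<bar>) / 2" for k
  proof -
    have a: "(\<Sum>i\<in>{1..n}. \<Sum>j\<in>{1..n}. tt n y k i j) = PP n y k * NN n y k / MM n y k"
      by (simp add: sum_tt_row[simplified] PP_def sum_distrib_right sum_divide_distrib)
    have b: "(\<Sum>i\<in>{1..n}. sp n y k i) = PP n y k * (1 - NN n y k / MM n y k)"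
      by (simp add: sp_def PP_def sum_distrib_right)
    have c: "(\<Sum>i\<in>{1..n}. sn n y k i) = NN n y k * (1 - PP n y k / MM n y k)"
      by (simp add: sn_def NN_def sum_distrib_right)
    have d: "PP n y k - NN n y k = (\<Sum>i\<in>{1..n}. y k i)"
      by (simp add: PP_def NN_def sum_subtractf[symmetric] yp_yn)
    show ?thesis unfolding cw_def a b c d[symmetric] MM_def
      by (rule weight_eq[OF PP_NN_nonneg])
  qed
  have u0: "0 \<le> uu n m x y i / 2" if i: "i \<in> {1..n}" for i
    using A i by (simp add: uu_def yp_yn)
  have R1: "(\<Sum>i\<in>{1..n}. (uu n m x y i / 2) *\<^sub>R (2 *\<^sub>R eS i)) \<in> Gs ?C (\<Sum>i\<in>{1..n}. uu n m x y i / 2)"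
  proof (rule Gs_sum[OF cC C0])
    fix i assume i: "i \<in> {1..n}"
    have "2 *\<^sub>R eS i \<in> hom_pts n m" using i unfolding hom_pts_def by blast
    hence "2 *\<^sub>R eS i \<in> ?C" by (rule hull_inc)
    thus "0 \<le> uu n m x y i / 2 \<and> (uu n m x y i / 2) *\<^sub>R (2 *\<^sub>R eS i) \<in> Gs ?C (uu n m x y i / 2)"
      using u0[OF i] Gs_pt[OF C0 u0[OF i]] by blast
  qed simp
  have cw0: "0 \<le> cw k" for k unfolding cw_eq using PP_NN_nonneg[of n y k] by simp
  have R2: "(\<Sum>k\<in>{1..m}. col n y k) \<in> Gs ?C (\<Sum>k\<in>{1..m}. cw k)"
    by (rule Gs_sum[OF cC C0]) (use col cw0 in auto)
  have R: "Rv n m x y \<in> Gs ?C ((\<Sum>i\<in>{1..n}. uu n m x y i / 2) + (\<Sum>k\<in>{1..m}. cw k))"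
    unfolding Rv_def by (rule Gs_add[OF cC _ _ R1 R2]) (use u0 cw0 in \<open>auto intro: sum_nonneg\<close>)
  have W: "(\<Sum>i\<in>{1..n}. uu n m x y i / 2) + (\<Sum>k\<in>{1..m}. cw k) \<le> 1"
  proof -
    have "(\<Sum>i\<in>{1..n}. uu n m x y i / 2) = ((\<Sum>i\<in>{1..n}. x i) - (\<Sum>k\<in>{1..m}. PP n y k + NN n y k)) / 2"
    proof -
      have "(\<Sum>i\<in>{1..n}. \<Sum>k\<in>{1..m}. yp y k i + yn y k i) = (\<Sum>k\<in>{1..m}. PP n y k + NN n y k)"
        by (subst sum.swap) (simp add: PP_def NN_def sum.distrib)
      thus ?thesis by (simp add: uu_def sum_divide_distrib[symmetric] sum_subtractf)
    qed
    moreover have "(\<Sum>k\<in>{1..m}. cw k) = ((\<Sum>k\<in>{1..m}. PP n y k + NN n y k) + (\<Sum>k\<in>{1..m}. \<bar>\<Sum>i\<in>{1..n}. y k i\<bar>)) / 2"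
      by (simp add: cw_eq sum_divide_distrib[symmetric] sum.distrib)
    ultimately show ?thesis using B by (simp add: field_simps)
  qed
  have w1: "0 \<le> (\<Sum>i\<in>{1..n}. uu n m x y i / 2)" by (rule sum_nonneg, rule u0)
  have w2: "0 \<le> (\<Sum>k\<in>{1..m}. cw k)" by (rule sum_nonneg, rule cw0)
  have "Rv n m x y \<in> Gs ?C 1"
    by (rule Gs_mono[OF cC C0 add_nonneg_nonneg[OF w1 w2] W R])
  thus ?thesis by (simp add: Gs_one)
qed




lemma Hom_sign:
  assumes f: "f \<in> Hom (cube_std m) (simplex_std n)" and s: "s \<in> Vc m"
  shows "f s \<in> Dn n" "f s i = f 0 i + (\<Sum>k\<in>{1..m}. s k * (f (unitv k) i - f 0 i))"
proof -
  have "s \<in> cube_std m" unfolding cube_hull using s by (rule hull_inc)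
  thus "f s \<in> Dn n" using f by (auto simp: Hom_iff)
  have ss: "s \<in> supp_on m" using s Vc_supp by blast
  show "f s i = f 0 i + (\<Sum>k\<in>{1..m}. s k * (f (unitv k) i - f 0 i))"
    using Hom_expand[OF f ss] by (simp add: sum_apply_fun)
qed

lemma hmap_in_C:
  assumes f: "f \<in> Hom (cube_std m) (simplex_std n)"
  shows "hmap n m f \<in> convex hull hom_pts n m"
proof -
  define x where "x i = 2 * f 0 i" for i
  define y where "y k i = 2 * (f (unitv k) i - f 0 i)" for k i
  have fs: "f s i = (x i + (\<Sum>k\<in>{1..m}. s k * y k i)) / 2" if s: "s \<in> Vc m" for s i
  proof -
    have "(\<Sum>k\<in>{1..m}. s k * y k i) = 2 * (\<Sum>k\<in>{1..m}. s k * (f (unitv k) i - f 0 i))"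
      by (simp add: y_def sum_distrib_left algebra_simps)
    thus ?thesis using Hom_sign(2)[OF f s, of i] by (simp add: x_def)
  qed
  have A: "\<forall>i\<in>{1..n}. (\<Sum>k\<in>{1..m}. \<bar>y k i\<bar>) \<le> x i"
  proof
    fix i assume i: "i \<in> {1..n}"
    define s where "s k = (if k \<in> {1..m} then (if 0 \<le> y k i then -1 else 1) else (0::real))" for k
    have s: "s \<in> Vc m" by (auto simp: s_def Vc_def)
    have "0 \<le> f s i" using Hom_sign(1)[OF f s] i by (simp add: Dn_def)
    moreover have "(\<Sum>k\<in>{1..m}. s k * y k i) = - (\<Sum>k\<in>{1..m}. \<bar>y k i\<bar>)"
      by (simp add: sum_negf[symmetric]) (rule sum.cong, auto simp: s_def)
    ultimately show "(\<Sum>k\<in>{1..m}. \<bar>y k i\<bar>) \<le> x i" using fs[OF s, of i] by simp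
  qed
  have B: "(\<Sum>i\<in>{1..n}. x i) + (\<Sum>k\<in>{1..m}. \<bar>\<Sum>i\<in>{1..n}. y k i\<bar>) \<le> 2"
  proof -
    define s where "s k = (if k \<in> {1..m} then (if 0 \<le> (\<Sum>i\<in>{1..n}. y k i) then 1 else -1) else (0::real))" for k
    have s: "s \<in> Vc m" by (auto simp: s_def Vc_def)
    have "(\<Sum>i\<in>{1..n}. f s i) \<le> 1" using Hom_sign(1)[OF f s] by (simp add: Dn_def)
    moreover have "(\<Sum>i\<in>{1..n}. f s i) = ((\<Sum>i\<in>{1..n}. x i) + (\<Sum>k\<in>{1..m}. s k * (\<Sum>i\<in>{1..n}. y k i))) / 2"
      by (simp add: fs[OF s] sum_divide_distrib[symmetric] sum.distrib sum_distrib_left) (rule sum.swap)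
    moreover have "(\<Sum>k\<in>{1..m}. s k * (\<Sum>i\<in>{1..n}. y k i)) = (\<Sum>k\<in>{1..m}. \<bar>\<Sum>i\<in>{1..n}. y k i\<bar>)"
      by (rule sum.cong) (auto simp: s_def)
    ultimately show ?thesis by simp
  qed
  have "hmap n m f = Rv n m x y"
  proof
    fix z show "hmap n m f z = Rv n m x y z"
    proof (cases z)
      case (Inl a) thus ?thesis by (simp add: Rv_Inl hmap_def x_def)
    next
      case (Inr ab)
      then obtain a b where z: "z = Inr (a,b)" by (cases ab) auto
      show ?thesis
      proof (cases "a \<in> {1..n} \<and> b \<in> {1..m}")
        case True thus ?thesis using hmap_Inr[OF f] by (simp add: z Rv_Inr y_def)
      next
        case False thus ?thesis by (auto simp: z Rv_Inr hmap_def)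
      qed
    qed
  qed
  thus ?thesis using decomp[OF A B] by simp
qed

lemma hmap_image: "hmap n m ` Hom (cube_std m) (simplex_std n) = convex hull hom_pts n m"
proof
  show "hmap n m ` Hom (cube_std m) (simplex_std n) \<subseteq> convex hull hom_pts n m"
    using hmap_in_C by blast
  show "convex hull hom_pts n m \<subseteq> hmap n m ` Hom (cube_std m) (simplex_std n)"
  proof
    fix p assume "p \<in> convex hull hom_pts n m"
    hence p: "p \<in> Ineq n m" using hull_Ineq by blast
    show "p \<in> hmap n m ` Hom (cube_std m) (simplex_std n)"
      using hmap_fp[OF p] fp_Hom[OF p] by force
  qed
qed

lemma ext_transfer:
  assumes h: "affine_map_on UNIV h" and inj: "inj_on h S" and S: "convex S" and x: "x \<in> S"
  shows "x extreme_point_of S \<longleftrightarrow> h x extreme_point_of (h ` S)"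
proof -
  have hl: "h ((1 - u) *\<^sub>R a + u *\<^sub>R b) = (1 - u) *\<^sub>R h a + u *\<^sub>R h b" for a b u
    using h unfolding affine_map_on_def by blast
  show ?thesis
  proof
    assume ex: "x extreme_point_of S"
    show "h x extreme_point_of (h ` S)"
      unfolding extreme_point_of_def
    proof (intro conjI ballI)
      show "h x \<in> h ` S" using x by blast
      fix ha hb assume "ha \<in> h ` S" "hb \<in> h ` S"
      then obtain a b where ab: "a \<in> S" "b \<in> S" "ha = h a" "hb = h b" by blast
      show "h x \<notin> open_segment ha hb"
      proof
        assume "h x \<in> open_segment ha hb"
        then obtain u where u: "0 \<le> u" "u \<le> 1" "h x = (1 - u) *\<^sub>R h a + u *\<^sub>R h b" "h x \<noteq> h a" "h x \<noteq> h b"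
          unfolding open_segment_def closed_segment_def ab by auto
        have zS: "(1 - u) *\<^sub>R a + u *\<^sub>R b \<in> S" using S ab u unfolding convex_def by auto
        have "x = (1 - u) *\<^sub>R a + u *\<^sub>R b" using inj x zS u(3) hl unfolding inj_on_def by metis
        hence "x \<in> open_segment a b" using u unfolding open_segment_def closed_segment_def by auto
        thus False using ex ab unfolding extreme_point_of_def by blast
      qed
    qed
  next
    assume ex: "h x extreme_point_of (h ` S)"
    show "x extreme_point_of S"
      unfolding extreme_point_of_def
    proof (intro conjI ballI)
      show "x \<in> S" by (rule x)
      fix a b assume ab: "a \<in> S" "b \<in> S"
      show "x \<notin> open_segment a b"
      proof
        assume "x \<in> open_segment a b"
        then obtain u where u: "0 \<le> u" "u \<le> 1" "x = (1 - u) *\<^sub>R a + u *\<^sub>R b" "x \<noteq> a" "x \<noteq> b"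
          unfolding open_segment_def closed_segment_def by auto
        have "h x \<noteq> h a" "h x \<noteq> h b" using inj x ab u unfolding inj_on_def by metis+
        moreover have "h x = (1 - u) *\<^sub>R h a + u *\<^sub>R h b" using u(3) hl by simp
        ultimately have "h x \<in> open_segment (h a) (h b)" using u unfolding open_segment_def closed_segment_def by auto
        thus False using ex ab unfolding extreme_point_of_def by blast
      qed
    qed
  qed
qed

lemma ext_image:
  "hmap n m ` {f. f extreme_point_of Hom (cube_std m) (simplex_std n)} = {v. v extreme_point_of (convex hull hom_pts n m)}"
  (is "hmap n m ` ?E = ?V")
proof -
  let ?H = "Hom (cube_std m) (simplex_std n)"
  have tr: "f \<in> ?H \<Longrightarrow> f extreme_point_of ?H \<longleftrightarrow> hmap n m f extreme_point_of (convex hull hom_pts n m)" for f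
    using ext_transfer[OF hmap_affine hmap_inj convex_Hom] hmap_image by metis
  show ?thesis
  proof
    show "hmap n m ` ?E \<subseteq> ?V" using tr by (auto simp: extreme_point_of_def)
    show "?V \<subseteq> hmap n m ` ?E"
    proof
      fix v assume v: "v \<in> ?V"
      hence "v \<in> convex hull hom_pts n m" by (simp add: extreme_point_of_def)
      then obtain f where f: "f \<in> ?H" "v = hmap n m f" using hmap_image by blast
      thus "v \<in> hmap n m ` ?E" using tr[OF f(1)] v by auto
    qed
  qed
qed

lemma card_ext:
  "card {f. f extreme_point_of Hom (cube_std m) (simplex_std n)} = card {v. v extreme_point_of (convex hull hom_pts n m)}"
proof -
  have "inj_on (hmap n m) {f. f extreme_point_of Hom (cube_std m) (simplex_std n)}"
    by (rule inj_on_subset[OF hmap_inj]) (auto simp: extreme_point_of_def)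
  thus ?thesis using ext_image card_image by metis
qed

lemma iso: "affinely_isomorphic (Hom (cube_std m) (simplex_std n)) (convex hull hom_pts n m)"
  unfolding affinely_isomorphic_def bij_betw_def using hmap_affine hmap_inj hmap_image by blast




lemma finite_hom_pts: "finite (hom_pts n m)"
proof -
  have 1: "{2 *\<^sub>R eS i | i. i \<in> {1..n}} = (\<lambda>i. 2 *\<^sub>R eS i) ` {1..n}" by auto
  have 2: "{eS i + eD i k | i k. i \<in> {1..n} \<and> k \<in> {1..m}} \<subseteq> (\<lambda>(i,k). eS i + eD i k) ` ({1..n} \<times> {1..m})" by auto
  have 3: "{eS i - eD i k | i k. i \<in> {1..n} \<and> k \<in> {1..m}} \<subseteq> (\<lambda>(i,k). eS i - eD i k) ` ({1..n} \<times> {1..m})" by auto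
  have 4: "{(eS i + eS j) + (eD i k - eD j k) | i j k. i \<in> {1..n} \<and> j \<in> {1..n} \<and> i \<noteq> j \<and> k \<in> {1..m}}
      \<subseteq> (\<lambda>(i,j,k). (eS i + eS j) + (eD i k - eD j k)) ` ({1..n} \<times> {1..n} \<times> {1..m})"
  proof
    fix x assume "x \<in> {(eS i + eS j) + (eD i k - eD j k) | i j k. i \<in> {1..n} \<and> j \<in> {1..n} \<and> i \<noteq> j \<and> k \<in> {1..m}}"
    then obtain i j k where "x = (eS i + eS j) + (eD i k - eD j k)" "i \<in> {1..n}" "j \<in> {1..n}" "k \<in> {1..m}" by blast
    thus "x \<in> (\<lambda>(i,j,k). (eS i + eS j) + (eD i k - eD j k)) ` ({1..n} \<times> {1..n} \<times> {1..m})"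
      by (intro image_eqI[of _ _ "(i,j,k)"]) auto
  qed
  show ?thesis unfolding hom_pts_def 1 using finite_subset[OF 4] finite_subset[OF 2] finite_subset[OF 3] by auto
qed

lemma sep:
  assumes lin: "\<And>a b u v. l (u *\<^sub>R a + v *\<^sub>R b) = u * l a + v * l b"
    and le: "\<forall>q\<in>S. l q \<le> c" and gt: "c < l p"
  shows "p \<notin> convex hull S"
proof -
  have "convex {q. l q \<le> c}"
    unfolding convex_def
  proof (intro ballI allI impI)
    fix a b u v assume ab: "a \<in> {q. l q \<le> c}" "b \<in> {q. l q \<le> c}" and uv: "0 \<le> (u::real)" "0 \<le> v" "u + v = 1"
    have "u * l a + v * l b \<le> u * c + v * c" using ab uv by (intro add_mono mult_left_mono) auto
    also have "u * c + v * c = c" using uv(3) by (metis distrib_right mult_1)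
    finally show "u *\<^sub>R a + v *\<^sub>R b \<in> {q. l q \<le> c}" using lin by simp
  qed
  hence "convex hull S \<subseteq> {q. l q \<le> c}" using le by (intro hull_minimal[of _ _ convex]) auto
  thus ?thesis using gt by auto
qed

definition sig :: "nat \<Rightarrow> (nat + nat \<times> nat \<Rightarrow> real) \<Rightarrow> real" where
  "sig n v = (\<Sum>i\<in>{1..n}. v (Inl i))"

lemma sig_lin: "sig n (u *\<^sub>R a + v *\<^sub>R b) = u * sig n a + v * sig n b"
  by (simp add: sig_def sum.distrib sum_distrib_left)

lemma sig_eS [simp]: "sig n (eS i) = (if i \<in> {1..n} then 1 else 0)"
  by (simp add: sig_def)
lemma sig_eD [simp]: "sig n (eD i k) = 0"
  by (simp add: sig_def)
lemma sig_add [simp]: "sig n (a + b) = sig n a + sig n b"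
  by (simp add: sig_def sum.distrib)
lemma sig_diff [simp]: "sig n (a - b) = sig n a - sig n b"
  unfolding sig_def minus_apply by (rule sum_subtractf)
lemma sig_scale [simp]: "sig n (c *\<^sub>R a) = c * sig n a"
  by (simp add: sig_def sum_distrib_left)
lemma sig_zero [simp]: "sig n 0 = 0"
  by (simp add: sig_def)

lemma not_in_hull_others:
  assumes p: "p \<in> hom_pts n m"
  shows "p \<notin> convex hull (hom_pts n m - {p})"
  using p[unfolded hom_pts_def]
proof (elim UnE CollectE exE conjE insertE)
  assume p0: "p = 0"
  show ?thesis
  proof (rule sep[where l = "\<lambda>v. - sig n v" and c = "-1"])
    show "\<forall>q\<in>hom_pts n m - {p}. - sig n q \<le> -1"
      using p0 unfolding hom_pts_def by auto
  qed (use p0 in \<open>auto simp: sig_lin algebra_simps\<close>)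
next
  fix a assume pa: "p = 2 *\<^sub>R eS a" "a \<in> {1..n}"
  show ?thesis
  proof (rule sep[where l = "\<lambda>v. v (Inl a)" and c = "1"])
    show "\<forall>q\<in>hom_pts n m - {p}. q (Inl a) \<le> 1"
      using pa unfolding hom_pts_def by (auto split: if_splits)
  qed (use pa(2-) in \<open>auto simp: pa(1) sig_lin algebra_simps\<close>)
next
  fix a b assume pa: "p = eS a + eD a b" "a \<in> {1..n}" "b \<in> {1..m}"
  show ?thesis
  proof (rule sep[where l = "\<lambda>v. 2 * v (Inr (a,b)) - sig n v" and c = "0"])
    show "\<forall>q\<in>hom_pts n m - {p}. 2 * q (Inr (a,b)) - sig n q \<le> 0"
      using pa unfolding hom_pts_def by (auto split: if_splits)
  qed (use pa(2-) in \<open>auto simp: pa(1) sig_lin algebra_simps\<close>)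
next
  fix a b assume pa: "p = eS a - eD a b" "a \<in> {1..n}" "b \<in> {1..m}"
  show ?thesis
  proof (rule sep[where l = "\<lambda>v. - 2 * v (Inr (a,b)) - sig n v" and c = "0"])
    show "\<forall>q\<in>hom_pts n m - {p}. - 2 * q (Inr (a,b)) - sig n q \<le> 0"
      using pa unfolding hom_pts_def by (auto split: if_splits)
  qed (use pa(2-) in \<open>auto simp: pa(1) sig_lin algebra_simps\<close>)
next
  fix a b c assume pa: "p = (eS a + eS b) + (eD a c - eD b c)" "a \<in> {1..n}" "b \<in> {1..n}" "a \<noteq> b" "c \<in> {1..m}"
  show ?thesis
  proof (rule sep[where l = "\<lambda>v. v (Inr (a,c)) - v (Inr (b,c))" and c = "1"])
    show "\<forall>q\<in>hom_pts n m - {p}. q (Inr (a,c)) - q (Inr (b,c)) \<le> 1"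
      using pa unfolding hom_pts_def by (auto split: if_splits)
  qed (use pa(2-) in \<open>auto simp: pa(1) sig_lin algebra_simps\<close>)
qed simp

lemma ext_hom_pts: "{v. v extreme_point_of (convex hull hom_pts n m)} = hom_pts n m"
proof
  show "{v. v extreme_point_of convex hull hom_pts n m} \<subseteq> hom_pts n m"
    using extreme_point_of_convex_hull by blast
  show "hom_pts n m \<subseteq> {v. v extreme_point_of convex hull hom_pts n m}"
  proof
    fix p assume p: "p \<in> hom_pts n m"
    have "p extreme_point_of convex hull (insert p (hom_pts n m - {p}))"
      by (rule extreme_point_of_convex_hull_insert) (use finite_hom_pts not_in_hull_others[OF p] in auto)
    moreover have "insert p (hom_pts n m - {p}) = hom_pts n m" using p by auto
    ultimately show "p \<in> {v. v extreme_point_of convex hull hom_pts n m}" by simp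
  qed
qed




lemma evneq: "f z \<noteq> g z \<Longrightarrow> f \<noteq> g" by auto

lemma L01: "0 \<noteq> 2 *\<^sub>R eS i" by (rule evneq[of _ "Inl i"]) simp
lemma L02: "0 \<noteq> eS i + eD i k" by (rule evneq[of _ "Inl i"]) simp
lemma L03: "0 \<noteq> eS i - eD i k" by (rule evneq[of _ "Inl i"]) simp
lemma L04: "i \<noteq> j \<Longrightarrow> 0 \<noteq> (eS i + eS j) + (eD i k - eD j k)" by (rule evneq[of _ "Inl i"]) simp
lemma L12: "2 *\<^sub>R eS a \<noteq> eS i + eD i k" by (rule evneq[of _ "Inr (i,k)"]) simp
lemma L13: "2 *\<^sub>R eS a \<noteq> eS i - eD i k" by (rule evneq[of _ "Inr (i,k)"]) simp
lemma L14: "i \<noteq> j \<Longrightarrow> 2 *\<^sub>R eS a \<noteq> (eS i + eS j) + (eD i k - eD j k)" by (rule evneq[of _ "Inr (i,k)"]) simp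
lemma L23: "eS a + eD a b \<noteq> eS i - eD i k" by (rule evneq[of _ "Inr (i,k)"]) auto
lemma L24: "i \<noteq> j \<Longrightarrow> eS a + eD a b \<noteq> (eS i + eS j) + (eD i k - eD j k)"
proof
  assume ij: "i \<noteq> j" and eq: "eS a + eD a b = (eS i + eS j) + (eD i k - eD j k)"
  have "(eS a + eD a b) (Inl i) = ((eS i + eS j) + (eD i k - eD j k)) (Inl i)"
       "(eS a + eD a b) (Inl j) = ((eS i + eS j) + (eD i k - eD j k)) (Inl j)" using eq by simp_all
  thus False using ij by (auto split: if_splits)
qed
lemma L34: "i \<noteq> j \<Longrightarrow> eS a - eD a b \<noteq> (eS i + eS j) + (eD i k - eD j k)"
proof
  assume ij: "i \<noteq> j" and eq: "eS a - eD a b = (eS i + eS j) + (eD i k - eD j k)"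
  have "(eS a - eD a b) (Inl i) = ((eS i + eS j) + (eD i k - eD j k)) (Inl i)"
       "(eS a - eD a b) (Inl j) = ((eS i + eS j) + (eD i k - eD j k)) (Inl j)" using eq by simp_all
  thus False using ij by (auto split: if_splits)
qed

definition "H1 n = (\<lambda>i. 2 *\<^sub>R eS i) ` {1..n}"
definition "H2 n m = (\<lambda>(i,k). eS i + eD i k) ` ({1..n} \<times> {1..m})"
definition "H3 n m = (\<lambda>(i,k). eS i - eD i k) ` ({1..n} \<times> {1..m})"
definition "TT n m = (SIGMA i:{1..n}. ({1..n} - {i}) \<times> {1..m})"
definition "H4 n m = (\<lambda>(i,j,k). (eS i + eS j) + (eD i k - eD j k)) ` TT n m"

lemma hom_pts_split: "hom_pts n m = {0} \<union> H1 n \<union> H2 n m \<union> H3 n m \<union> H4 n m"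
proof -
  have 1: "{2 *\<^sub>R eS i | i. i \<in> {1..n}} = H1 n" by (auto simp: H1_def)
  have 2: "{eS i + eD i k | i k. i \<in> {1..n} \<and> k \<in> {1..m}} = H2 n m" by (auto simp: H2_def; blast)
  have 3: "{eS i - eD i k | i k. i \<in> {1..n} \<and> k \<in> {1..m}} = H3 n m" by (auto simp: H3_def; blast)
  have 4: "{(eS i + eS j) + (eD i k - eD j k) | i j k. i \<in> {1..n} \<and> j \<in> {1..n} \<and> i \<noteq> j \<and> k \<in> {1..m}} = H4 n m" (is "?L = _")
  proof
    show "?L \<subseteq> H4 n m"
    proof
      fix x assume "x \<in> ?L"
      then obtain i j k where x: "x = (eS i + eS j) + (eD i k - eD j k)" and c: "i \<in> {1..n}" "j \<in> {1..n}" "i \<noteq> j" "k \<in> {1..m}" by blast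
      show "x \<in> H4 n m" unfolding H4_def x by (rule image_eqI[of _ _ "(i,j,k)"]) (use c in \<open>auto simp: TT_def\<close>)
    qed
    show "H4 n m \<subseteq> ?L"
    proof
      fix x assume "x \<in> H4 n m"
      then obtain i j k where x: "x = (eS i + eS j) + (eD i k - eD j k)" and c: "(i,j,k) \<in> TT n m"
        unfolding H4_def by auto
      have c': "i \<in> {1..n}" "j \<in> {1..n}" "i \<noteq> j" "k \<in> {1..m}" using c by (auto simp: TT_def)
      show "x \<in> ?L" using x c' by blast
    qed
  qed
  show ?thesis unfolding hom_pts_def 1 2 3 4 ..
qed

lemma card_H1: "card (H1 n) = n"
proof -
  have "inj_on (\<lambda>i. 2 *\<^sub>R eS i) {1..n}"
  proof (rule inj_onI)
    fix i j assume "2 *\<^sub>R eS i = 2 *\<^sub>R eS j"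
    hence "(2 *\<^sub>R eS i) (Inl i) = (2 *\<^sub>R eS j) (Inl i)" by simp
    thus "i = j" by (simp split: if_splits)
  qed
  thus ?thesis unfolding H1_def by (simp add: card_image)
qed

lemma card_H2: "card (H2 n m) = n * m"
proof -
  have "inj_on (\<lambda>(i,k). eS i + eD i k) ({1..n} \<times> {1..m})"
  proof (rule inj_onI, clarify)
    fix i k i' k' assume "eS i + eD i k = eS i' + eD i' k'"
    hence "(eS i + eD i k) (Inr (i,k)) = (eS i' + eD i' k') (Inr (i,k))" by simp
    thus "i = i' \<and> k = k'" by (simp split: if_splits)
  qed
  thus ?thesis unfolding H2_def by (simp add: card_image card_cartesian_product)
qed

lemma card_H3: "card (H3 n m) = n * m"
proof -
  have "inj_on (\<lambda>(i,k). eS i - eD i k) ({1..n} \<times> {1..m})"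
  proof (rule inj_onI, clarify)
    fix i k i' k' assume "eS i - eD i k = eS i' - eD i' k'"
    hence "(eS i - eD i k) (Inr (i,k)) = (eS i' - eD i' k') (Inr (i,k))" by simp
    thus "i = i' \<and> k = k'" by (simp split: if_splits)
  qed
  thus ?thesis unfolding H3_def by (simp add: card_image card_cartesian_product)
qed

lemma card_TT: "card (TT n m) = n * ((n - 1) * m)"
proof -
  have "card (TT n m) = (\<Sum>i\<in>{1..n}. card (({1..n} - {i}) \<times> {1..m}))"
    unfolding TT_def by (rule card_SigmaI) auto
  also have "\<dots> = (\<Sum>i\<in>{1..n}. (n - 1) * m)"
    by (rule sum.cong) (auto simp: card_cartesian_product)
  finally show ?thesis by simp
qed

lemma card_H4: "card (H4 n m) = n * ((n - 1) * m)"
proof -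
  have "inj_on (\<lambda>(i,j,k). (eS i + eS j) + (eD i k - eD j k)) (TT n m)"
  proof (rule inj_onI)
    fix x y assume tx: "x \<in> TT n m" and ty: "y \<in> TT n m"
      and eqxy: "(\<lambda>(i,j,k). (eS i + eS j) + (eD i k - eD j k)) x = (\<lambda>(i,j,k). (eS i + eS j) + (eD i k - eD j k)) y"
    obtain i j k where xe: "x = (i,j,k)" by (cases x) auto
    obtain i' j' k' where ye: "y = (i',j',k')" by (cases y) auto
    have eq: "(eS i + eS j) + (eD i k - eD j k) = (eS i' + eS j') + (eD i' k' - eD j' k')"
      using eqxy xe ye by simp
    have ij: "i \<noteq> j" "i' \<noteq> j'" using tx ty xe ye by (auto simp: TT_def)
    have "((eS i + eS j) + (eD i k - eD j k)) (Inr (i,k)) = ((eS i' + eS j') + (eD i' k' - eD j' k')) (Inr (i,k))"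
      using eq by simp
    hence 1: "i = i' \<and> k = k'" using ij by (auto split: if_splits)
    have "((eS i + eS j) + (eD i k - eD j k)) (Inr (j,k)) = ((eS i' + eS j') + (eD i' k' - eD j' k')) (Inr (j,k))"
      using eq by simp
    hence "j = j'" using ij 1 by (auto split: if_splits)
    thus "x = y" using 1 xe ye by simp
  qed
  thus ?thesis unfolding H4_def by (simp add: card_image card_TT)
qed

lemma fin: "finite (H1 n)" "finite (H2 n m)" "finite (H3 n m)" "finite (H4 n m)"
  by (auto simp: H1_def H2_def H3_def H4_def TT_def)

lemma card_hom_pts: "card (hom_pts n m) = (n + 1) * (m * n + 1)"
proof -
  have d1: "{0} \<inter> H1 n = {}" using L01 L01[THEN not_sym] by (auto simp: H1_def)
  have d2: "({0} \<union> H1 n) \<inter> H2 n m = {}" using L02 L12 L02[THEN not_sym] L12[THEN not_sym] by (auto simp: H1_def H2_def)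
  have d3: "({0} \<union> H1 n \<union> H2 n m) \<inter> H3 n m = {}" using L03 L13 L23 L03[THEN not_sym] L13[THEN not_sym] L23[THEN not_sym] by (auto simp: H1_def H2_def H3_def)
  have d4: "({0} \<union> H1 n \<union> H2 n m \<union> H3 n m) \<inter> H4 n m = {}"
  proof -
    have "x \<notin> {0} \<union> H1 n \<union> H2 n m \<union> H3 n m" if "x \<in> H4 n m" for x
    proof -
      from that obtain i j k where x: "x = (eS i + eS j) + (eD i k - eD j k)" and ij: "i \<noteq> j"
        by (auto simp: H4_def TT_def)
      show ?thesis using L04[OF ij, THEN not_sym] L14[OF ij, THEN not_sym] L24[OF ij, THEN not_sym] L34[OF ij, THEN not_sym]
        by (auto simp: x H1_def H2_def H3_def)
    qed
    thus ?thesis by blast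
  qed
  have "card (hom_pts n m) = 1 + n + n * m + n * m + n * ((n - 1) * m)"
    unfolding hom_pts_split
    using fin d1 d2 d3 d4 card_H1 card_H2 card_H3 card_H4
    by (simp add: card_Un_disjoint)
  also have "\<dots> = (n + 1) * (m * n + 1)"
    by (cases n) (simp_all add: algebra_simps)
  finally show ?thesis .
qed



theorem corollary4p2:
  fixes m n :: nat
  shows "card {f. f extreme_point_of Hom (cube_std m) (simplex_std n)} = (n + 1) * (m * n + 1)
       \<and> affinely_isomorphic (Hom (cube_std m) (simplex_std n)) (convex hull hom_pts n m)
       \<and> {v. v extreme_point_of (convex hull hom_pts n m)} = hom_pts n m"
  using card_ext[of m n] ext_hom_pts[of n m] card_hom_pts[of n m] iso[of m n] by simp

end
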